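(* Let $\varphi\colon M\rightarrow N$ be a homomorphism of monoids such that $N$ is locally finite and the trace $\mathrm{tr}_{\varphi}(n_1,n_2)$ is locally finite for all $n_1,n_2\in N$. Then $M$ is locally finite.
   Context: A monoid is locally finite if all its finitely generated submonoids are finite. For a monoid homomorphism $\varphi\colon M\to N$ and $(n_1,n_2)\in N\times N$, the trace $\mathrm{tr}_{\varphi}(n_1,n_2)$ is the quotient of the submonoid $\{m\in M\mid n_1\varphi(m)=n_1,\ \varphi(m)n_2=n_2\}$ of $M$ by the congruence $\equiv$ defined by $m\equiv m'$ if and only if $m_1mm_2=m_1m'm_2$ for all $m_1\in\varphi^{-1}(n_1)$ and all $m_2\in\varphi^{-1}(n_2)$. *)

theory Defs
  imports "HOL-Algebra.Group"
begin

definition gen_submonoid :: "('a, 'b) monoid_scheme \<Rightarrow> 'a set \<Rightarrow> 'a set" where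
  "gen_submonoid G A = \<Inter> {H. submonoid H G \<and> A \<subseteq> H}"

definition locally_finite_monoid :: "('a, 'b) monoid_scheme \<Rightarrow> bool" where
  "locally_finite_monoid G \<longleftrightarrow>
     (\<forall>A. A \<subseteq> carrier G \<and> finite A \<longrightarrow> finite (gen_submonoid G A))"

definition monoid_hom :: "('a, 'c) monoid_scheme \<Rightarrow> ('b, 'd) monoid_scheme \<Rightarrow> ('a \<Rightarrow> 'b) set" where
  "monoid_hom M N = {f \<in> hom M N. f \<one>\<^bsub>M\<^esub> = \<one>\<^bsub>N\<^esub>}"

definition trace_set ::
  "('a \<Rightarrow> 'b) \<Rightarrow> ('a, 'c) monoid_scheme \<Rightarrow> ('b, 'd) monoid_scheme \<Rightarrow> 'b \<Rightarrow> 'b \<Rightarrow> 'a set" where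
  "trace_set \<phi> M N n1 n2 =
     {m \<in> carrier M. n1 \<otimes>\<^bsub>N\<^esub> \<phi> m = n1 \<and> \<phi> m \<otimes>\<^bsub>N\<^esub> n2 = n2}"

definition trace_rel ::
  "('a \<Rightarrow> 'b) \<Rightarrow> ('a, 'c) monoid_scheme \<Rightarrow> ('b, 'd) monoid_scheme \<Rightarrow> 'b \<Rightarrow> 'b \<Rightarrow> ('a \<times> 'a) set" where
  "trace_rel \<phi> M N n1 n2 =
     {(m, m'). m \<in> trace_set \<phi> M N n1 n2 \<and> m' \<in> trace_set \<phi> M N n1 n2 \<and>
        (\<forall>m1 \<in> carrier M. \<forall>m2 \<in> carrier M. \<phi> m1 = n1 \<longrightarrow> \<phi> m2 = n2 \<longrightarrow>
           m1 \<otimes>\<^bsub>M\<^esub> m \<otimes>\<^bsub>M\<^esub> m2 = m1 \<otimes>\<^bsub>M\<^esub> m' \<otimes>\<^bsub>M\<^esub> m2)}"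

text \<open>Elements are equivalence classes; the product of two classes is the class of the
  product of representatives (given as the union over all representatives, which is a
  single class since the relation is a congruence).\<close>
definition trace_monoid ::
  "('a \<Rightarrow> 'b) \<Rightarrow> ('a, 'c) monoid_scheme \<Rightarrow> ('b, 'd) monoid_scheme \<Rightarrow> 'b \<Rightarrow> 'b \<Rightarrow> 'a set monoid" where
  "trace_monoid \<phi> M N n1 n2 =
     \<lparr> carrier = trace_set \<phi> M N n1 n2 // trace_rel \<phi> M N n1 n2,
       mult = (\<lambda>X Y. \<Union> {trace_rel \<phi> M N n1 n2 `` {x \<otimes>\<^bsub>M\<^esub> y} | x y. x \<in> X \<and> y \<in> Y}),
       one = trace_rel \<phi> M N n1 n2 `` {\<one>\<^bsub>M\<^esub>} \<rparr>"

end

theory Submission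
  imports Defs
begin

locale LF = M?: monoid M + N?: monoid N
  for M :: "('a, 'c) monoid_scheme" and N :: "('b, 'd) monoid_scheme" +
  fixes \<phi> :: "'a \<Rightarrow> 'b" and A :: "'a set"
  assumes hom: "\<phi> \<in> monoid_hom M N"
    and tr: "\<forall>n1 \<in> carrier N. \<forall>n2 \<in> carrier N. locally_finite_monoid (trace_monoid \<phi> M N n1 n2)"
    and AM: "A \<subseteq> carrier M" and finA: "finite A"
begin

lemma phi_carrier: "x \<in> carrier M \<Longrightarrow> \<phi> x \<in> carrier N"
  using hom unfolding monoid_hom_def hom_def by auto

lemma phi_mult: "x \<in> carrier M \<Longrightarrow> y \<in> carrier M \<Longrightarrow> \<phi> (x \<otimes>\<^bsub>M\<^esub> y) = \<phi> x \<otimes>\<^bsub>N\<^esub> \<phi> y"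
  using hom unfolding monoid_hom_def hom_def by auto

lemma phi_one: "\<phi> \<one>\<^bsub>M\<^esub> = \<one>\<^bsub>N\<^esub>"
  using hom unfolding monoid_hom_def by auto

definition val :: "'a list \<Rightarrow> 'a" where
  "val w = foldr (\<lambda>a b. a \<otimes>\<^bsub>M\<^esub> b) w \<one>\<^bsub>M\<^esub>"

lemma val_Nil[simp]: "val [] = \<one>\<^bsub>M\<^esub>" by (simp add: val_def)
lemma val_Cons[simp]: "val (a # w) = a \<otimes>\<^bsub>M\<^esub> val w" by (simp add: val_def)

lemma val_carrier: "set w \<subseteq> carrier M \<Longrightarrow> val w \<in> carrier M"
  by (induction w) auto

lemma val_append: "set u \<subseteq> carrier M \<Longrightarrow> set v \<subseteq> carrier M \<Longrightarrow> val (u @ v) = val u \<otimes>\<^bsub>M\<^esub> val v"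
  by (induction u) (auto simp: val_carrier M.m_assoc)

definition psi :: "'a list \<Rightarrow> 'b" where "psi w = \<phi> (val w)"

lemma psi_Nil[simp]: "psi [] = \<one>\<^bsub>N\<^esub>" by (simp add: psi_def phi_one)

lemma psi_carrier: "set w \<subseteq> carrier M \<Longrightarrow> psi w \<in> carrier N"
  by (simp add: psi_def phi_carrier val_carrier)

lemma psi_Cons: "set (a # w) \<subseteq> carrier M \<Longrightarrow> psi (a # w) = \<phi> a \<otimes>\<^bsub>N\<^esub> psi w"
  by (simp add: psi_def phi_mult val_carrier)

lemma psi_append: "set u \<subseteq> carrier M \<Longrightarrow> set v \<subseteq> carrier M \<Longrightarrow> psi (u @ v) = psi u \<otimes>\<^bsub>N\<^esub> psi v"
  by (simp add: psi_def val_append phi_mult val_carrier)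

definition Fe :: "'b \<Rightarrow> 'b \<Rightarrow> 'a \<Rightarrow> 'a \<Rightarrow> 'a \<Rightarrow> 'a" where
  "Fe n1 n2 m = (\<lambda>x y. if x \<in> carrier M \<and> \<phi> x = n1 \<and> y \<in> carrier M \<and> \<phi> y = n2
      then x \<otimes>\<^bsub>M\<^esub> m \<otimes>\<^bsub>M\<^esub> y else undefined)"

lemma rel_iff: "(m, m') \<in> trace_rel \<phi> M N n1 n2 \<longleftrightarrow>
   m \<in> trace_set \<phi> M N n1 n2 \<and> m' \<in> trace_set \<phi> M N n1 n2 \<and> Fe n1 n2 m = Fe n1 n2 m'"
  unfolding trace_rel_def Fe_def by (auto simp: fun_eq_iff)

lemma cls: "m \<in> trace_set \<phi> M N n1 n2 \<Longrightarrow>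
   trace_rel \<phi> M N n1 n2 `` {m} = {m' \<in> trace_set \<phi> M N n1 n2. Fe n1 n2 m' = Fe n1 n2 m}"
  using rel_iff by auto

lemma TS_mult:
  assumes "a \<in> trace_set \<phi> M N n1 n2" "b \<in> trace_set \<phi> M N n1 n2" "n1 \<in> carrier N" "n2 \<in> carrier N"
  shows "a \<otimes>\<^bsub>M\<^esub> b \<in> trace_set \<phi> M N n1 n2"
proof -
  have c: "a \<in> carrier M" "b \<in> carrier M" "n1 \<otimes>\<^bsub>N\<^esub> \<phi> a = n1" "\<phi> b \<otimes>\<^bsub>N\<^esub> n2 = n2"
     "n1 \<otimes>\<^bsub>N\<^esub> \<phi> b = n1" "\<phi> a \<otimes>\<^bsub>N\<^esub> n2 = n2"
    using assms unfolding trace_set_def by auto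
  have 1: "n1 \<otimes>\<^bsub>N\<^esub> \<phi> (a \<otimes>\<^bsub>M\<^esub> b) = n1"
    using c assms by (simp add: phi_mult phi_carrier flip: N.m_assoc)
  have 2: "\<phi> (a \<otimes>\<^bsub>M\<^esub> b) \<otimes>\<^bsub>N\<^esub> n2 = n2"
    using c assms by (simp add: phi_mult phi_carrier N.m_assoc)
  show ?thesis using 1 2 c unfolding trace_set_def by auto
qed

lemma TS_one: "n1 \<in> carrier N \<Longrightarrow> n2 \<in> carrier N \<Longrightarrow> \<one>\<^bsub>M\<^esub> \<in> trace_set \<phi> M N n1 n2"
  unfolding trace_set_def by (simp add: phi_one)

lemma Fe_cong:
  assumes TS: "a \<in> trace_set \<phi> M N n1 n2" "a' \<in> trace_set \<phi> M N n1 n2"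
     "b \<in> trace_set \<phi> M N n1 n2" "b' \<in> trace_set \<phi> M N n1 n2"
    and n: "n1 \<in> carrier N" "n2 \<in> carrier N"
    and ea: "Fe n1 n2 a = Fe n1 n2 a'" and eb: "Fe n1 n2 b = Fe n1 n2 b'"
  shows "Fe n1 n2 (a \<otimes>\<^bsub>M\<^esub> b) = Fe n1 n2 (a' \<otimes>\<^bsub>M\<^esub> b')"
proof (rule ext, rule ext)
  fix x y
  have C: "a \<in> carrier M" "a' \<in> carrier M" "b \<in> carrier M" "b' \<in> carrier M"
    and S: "n1 \<otimes>\<^bsub>N\<^esub> \<phi> a = n1" "\<phi> b' \<otimes>\<^bsub>N\<^esub> n2 = n2"
    using TS unfolding trace_set_def by auto
  show "Fe n1 n2 (a \<otimes>\<^bsub>M\<^esub> b) x y = Fe n1 n2 (a' \<otimes>\<^bsub>M\<^esub> b') x y"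
  proof (cases "x \<in> carrier M \<and> \<phi> x = n1 \<and> y \<in> carrier M \<and> \<phi> y = n2")
    case True
    then have x: "x \<in> carrier M" "\<phi> x = n1" and y: "y \<in> carrier M" "\<phi> y = n2" by auto
    have xa: "x \<otimes>\<^bsub>M\<^esub> a \<in> carrier M" "\<phi> (x \<otimes>\<^bsub>M\<^esub> a) = n1"
      using x C S by (auto simp: phi_mult)
    have by': "b' \<otimes>\<^bsub>M\<^esub> y \<in> carrier M" "\<phi> (b' \<otimes>\<^bsub>M\<^esub> y) = n2"
      using y C S by (auto simp: phi_mult)
    have 1: "x \<otimes>\<^bsub>M\<^esub> a \<otimes>\<^bsub>M\<^esub> b \<otimes>\<^bsub>M\<^esub> y = x \<otimes>\<^bsub>M\<^esub> a \<otimes>\<^bsub>M\<^esub> b' \<otimes>\<^bsub>M\<^esub> y"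
      using fun_cong[OF fun_cong[OF eb, of "x \<otimes>\<^bsub>M\<^esub> a"], of y] xa y unfolding Fe_def by simp
    have 2: "x \<otimes>\<^bsub>M\<^esub> a \<otimes>\<^bsub>M\<^esub> (b' \<otimes>\<^bsub>M\<^esub> y) = x \<otimes>\<^bsub>M\<^esub> a' \<otimes>\<^bsub>M\<^esub> (b' \<otimes>\<^bsub>M\<^esub> y)"
      using fun_cong[OF fun_cong[OF ea, of x], of "b' \<otimes>\<^bsub>M\<^esub> y"] x by' unfolding Fe_def by simp
    have "x \<otimes>\<^bsub>M\<^esub> (a \<otimes>\<^bsub>M\<^esub> b) \<otimes>\<^bsub>M\<^esub> y = x \<otimes>\<^bsub>M\<^esub> a \<otimes>\<^bsub>M\<^esub> b \<otimes>\<^bsub>M\<^esub> y"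
      using x y C by (simp add: M.m_assoc)
    also have "\<dots> = x \<otimes>\<^bsub>M\<^esub> a \<otimes>\<^bsub>M\<^esub> (b' \<otimes>\<^bsub>M\<^esub> y)" using 1 x y C by (simp add: M.m_assoc)
    also have "\<dots> = x \<otimes>\<^bsub>M\<^esub> a' \<otimes>\<^bsub>M\<^esub> (b' \<otimes>\<^bsub>M\<^esub> y)" by (rule 2)
    also have "\<dots> = x \<otimes>\<^bsub>M\<^esub> (a' \<otimes>\<^bsub>M\<^esub> b') \<otimes>\<^bsub>M\<^esub> y" using x y C by (simp add: M.m_assoc)
    finally show ?thesis using True unfolding Fe_def by simp
  next
    case False then show ?thesis unfolding Fe_def by (simp only: if_not_P[OF False] if_False)
  qed
qed

lemma trmult:
  assumes "a \<in> trace_set \<phi> M N n1 n2" "b \<in> trace_set \<phi> M N n1 n2" "n1 \<in> carrier N" "n2 \<in> carrier N"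
  shows "trace_rel \<phi> M N n1 n2 `` {a} \<otimes>\<^bsub>trace_monoid \<phi> M N n1 n2\<^esub> trace_rel \<phi> M N n1 n2 `` {b}
     = trace_rel \<phi> M N n1 n2 `` {a \<otimes>\<^bsub>M\<^esub> b}"
proof -
  let ?R = "trace_rel \<phi> M N n1 n2"
  let ?TS = "trace_set \<phi> M N n1 n2"
  have ab: "a \<otimes>\<^bsub>M\<^esub> b \<in> ?TS" using TS_mult assms by blast
  have eq: "?R `` {x \<otimes>\<^bsub>M\<^esub> y} = ?R `` {a \<otimes>\<^bsub>M\<^esub> b}" if "x \<in> ?R `` {a}" "y \<in> ?R `` {b}" for x y
  proof -
    have x: "x \<in> ?TS" "Fe n1 n2 x = Fe n1 n2 a" and y: "y \<in> ?TS" "Fe n1 n2 y = Fe n1 n2 b"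
      using that cls assms by auto
    have "Fe n1 n2 (x \<otimes>\<^bsub>M\<^esub> y) = Fe n1 n2 (a \<otimes>\<^bsub>M\<^esub> b)"
      using Fe_cong[OF x(1) assms(1) y(1) assms(2) assms(3,4) x(2) y(2)] .
    moreover have "x \<otimes>\<^bsub>M\<^esub> y \<in> ?TS" using TS_mult x y assms by blast
    ultimately show ?thesis using cls ab by simp
  qed
  have aa: "a \<in> ?R `` {a}" "b \<in> ?R `` {b}" using cls assms by auto
  have "{?R `` {x \<otimes>\<^bsub>M\<^esub> y} | x y. x \<in> ?R `` {a} \<and> y \<in> ?R `` {b}} = {?R `` {a \<otimes>\<^bsub>M\<^esub> b}}"
  proof
    show "{?R `` {x \<otimes>\<^bsub>M\<^esub> y} | x y. x \<in> ?R `` {a} \<and> y \<in> ?R `` {b}} \<subseteq> {?R `` {a \<otimes>\<^bsub>M\<^esub> b}}"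
      using eq by blast
    show "{?R `` {a \<otimes>\<^bsub>M\<^esub> b}} \<subseteq> {?R `` {x \<otimes>\<^bsub>M\<^esub> y} | x y. x \<in> ?R `` {a} \<and> y \<in> ?R `` {b}}"
      using aa by blast
  qed
  then show ?thesis unfolding trace_monoid_def by (simp only: monoid.simps cSup_singleton)
qed

lemma setA: "set w \<subseteq> A \<Longrightarrow> set w \<subseteq> carrier M" using AM by blast

definition pat :: "'b \<Rightarrow> 'b \<Rightarrow> 'a list \<Rightarrow> nat \<Rightarrow> 'b \<times> 'b" where
  "pat p q w t = (p \<otimes>\<^bsub>N\<^esub> psi (take t w), psi (drop t w) \<otimes>\<^bsub>N\<^esub> q)"

definition pairs :: "'b \<Rightarrow> 'b \<Rightarrow> 'a list \<Rightarrow> ('b \<times> 'b) set" where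
  "pairs p q w = pat p q w ` {..length w}"

definition Fset :: "'b \<Rightarrow> 'b \<Rightarrow> ('b \<times> 'b) set \<Rightarrow> ('a \<Rightarrow> 'a \<Rightarrow> 'a) set" where
  "Fset p q P = {Fe p q (val w) | w. set w \<subseteq> A \<and> pairs p q w \<subseteq> P}"

lemma pairs_sub: "pairs p q w \<subseteq> P \<longleftrightarrow> (\<forall>t \<le> length w. pat p q w t \<in> P)"
  by (auto simp: pairs_def)

lemma pat_Cons:
  assumes "set (c # w) \<subseteq> carrier M" "p \<in> carrier N" "q \<in> carrier N"
  shows "pat p q (c # w) (Suc s) = pat (p \<otimes>\<^bsub>N\<^esub> \<phi> c) q w s"
proof -
  have "set (take s w) \<subseteq> carrier M" using assms(1) set_take_subset by fastforce
  then show ?thesis using assms unfolding pat_def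
    by (simp add: psi_Cons psi_carrier phi_carrier N.m_assoc)
qed

lemma pat_snoc:
  assumes "set (h @ [d]) \<subseteq> carrier M" "p \<in> carrier N" "r \<in> carrier N" "s \<le> length h"
  shows "pat p r (h @ [d]) s = pat p (\<phi> d \<otimes>\<^bsub>N\<^esub> r) h s"
proof -
  have s: "set (drop s h) \<subseteq> carrier M" using assms(1) set_drop_subset by fastforce
  have d: "d \<in> carrier M" using assms(1) by auto
  have "psi (drop s h @ [d]) = psi (drop s h) \<otimes>\<^bsub>N\<^esub> \<phi> d"
    using s d by (simp add: psi_append psi_Cons phi_carrier)
  then show ?thesis using assms s d unfolding pat_def
    by (simp add: psi_carrier phi_carrier N.m_assoc)
qed

lemma drop_take_app: "t \<le> t0 \<Longrightarrow> drop t (take t0 w) @ drop t0 w = drop t w"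
proof -
  assume "t \<le> t0"
  then have "drop t0 w = drop (t0 - t) (drop t w)" by simp
  then show ?thesis by (simp only: drop_take append_take_drop_id)
qed

lemma pat_prefix:
  assumes "set w \<subseteq> carrier M" "p \<in> carrier N" "q \<in> carrier N" "t \<le> t0"
  shows "pat p (psi (drop t0 w) \<otimes>\<^bsub>N\<^esub> q) (take t0 w) t = pat p q w t"
proof -
  have s1: "set (drop t (take t0 w)) \<subseteq> carrier M" "set (drop t0 w) \<subseteq> carrier M"
    using assms(1) by (meson in_set_dropD in_set_takeD subset_code(1))+
  have "psi (drop t (take t0 w)) \<otimes>\<^bsub>N\<^esub> (psi (drop t0 w) \<otimes>\<^bsub>N\<^esub> q) = psi (drop t w) \<otimes>\<^bsub>N\<^esub> q"
    using s1 assms drop_take_app[OF assms(4), of w]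
    by (metis N.m_assoc psi_append psi_carrier)
  moreover have "take t (take t0 w) = take t w" using assms(4) by (simp add: min_def)
  ultimately show ?thesis unfolding pat_def by simp
qed

lemma pat_suffix:
  assumes "set w \<subseteq> carrier M" "p \<in> carrier N" "q \<in> carrier N" "p \<otimes>\<^bsub>N\<^esub> psi (take t0 w) = p"
  shows "pat p q (drop t0 w) s = pat p q w (t0 + s)"
proof -
  have s1: "set (take t0 w) \<subseteq> carrier M" "set (take s (drop t0 w)) \<subseteq> carrier M"
    using assms(1) by (meson in_set_dropD in_set_takeD subset_code(1))+
  have "p \<otimes>\<^bsub>N\<^esub> psi (take (t0 + s) w) = p \<otimes>\<^bsub>N\<^esub> psi (take s (drop t0 w))"
    using s1 assms by (simp add: take_add psi_append psi_carrier flip: N.m_assoc)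
  moreover have "drop (t0 + s) w = drop s (drop t0 w)" by (simp add: add.commute)
  ultimately show ?thesis unfolding pat_def by simp
qed

lemma step:
  assumes p: "p \<in> carrier N" and r: "r \<in> carrier N" and q: "q \<in> carrier N"
    and IH: "\<forall>p'\<in>carrier N. \<forall>q'\<in>carrier N. finite (Fset p' q' (P - {(p,r)}))"
  shows "finite {Fe p q (val w) | w. set w \<subseteq> A \<and> pairs p q w \<subseteq> P \<and> psi w \<otimes>\<^bsub>N\<^esub> q = r}"
proof -
  define P' where "P' = P - {(p,r)}"
  define TS where "TS = trace_set \<phi> M N p r"
  define R where "R = trace_rel \<phi> M N p r"
  define TM where "TM = trace_monoid \<phi> M N p r"
  define Segs where "Segs = {g. set g \<subseteq> A \<and> g \<noteq> [] \<and> p \<otimes>\<^bsub>N\<^esub> psi g = p \<and> psi g \<otimes>\<^bsub>N\<^esub> r = r \<and>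
      (\<forall>t. 0 < t \<and> t < length g \<longrightarrow> pat p r g t \<in> P')}"
  define B where "B = (\<lambda>g. R `` {val g}) ` Segs"
  define K where "K = gen_submonoid TM B"
  define Tails where "Tails = {w. set w \<subseteq> A \<and> psi w \<otimes>\<^bsub>N\<^esub> q = r \<and>
      (\<forall>t. 0 < t \<and> t \<le> length w \<longrightarrow> pat p q w t \<in> P')}"
  have segTS: "val g \<in> TS" if "g \<in> Segs" for g
    using that setA val_carrier unfolding Segs_def TS_def trace_set_def psi_def by auto
  define G where "G = (\<lambda>c d F. (\<lambda>x y. if x \<in> carrier M \<and> \<phi> x = p \<and> y \<in> carrier M \<and> \<phi> y = r
      then F (x \<otimes>\<^bsub>M\<^esub> c) (d \<otimes>\<^bsub>M\<^esub> y) else undefined) :: 'a \<Rightarrow> 'a \<Rightarrow> 'a)"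
  have segF: "Fe p r (val g) \<in> (\<lambda>c. Fe p r (c \<otimes>\<^bsub>M\<^esub> \<one>\<^bsub>M\<^esub>)) ` A \<union>
      (\<Union>c\<in>A. \<Union>d\<in>A. G c d ` Fset (p \<otimes>\<^bsub>N\<^esub> \<phi> c) (\<phi> d \<otimes>\<^bsub>N\<^esub> r) P')" if g: "g \<in> Segs" for g
  proof -
    from g have gA: "set g \<subseteq> A" and gne: "g \<noteq> []"
      and gi: "\<And>t. 0 < t \<Longrightarrow> t < length g \<Longrightarrow> pat p r g t \<in> P'" unfolding Segs_def by auto
    obtain c g' where cg: "g = c # g'" using gne by (cases g) auto
    show ?thesis
    proof (cases "g' = []")
      case True
      then show ?thesis using cg gA by auto
    next
      case False
      obtain h d where hd: "g' = h @ [d]" using False by (metis append_butlast_last_id)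
      have c: "c \<in> A" "c \<in> carrier M" and d: "d \<in> A" "d \<in> carrier M" and hA: "set h \<subseteq> A"
        and hM: "set h \<subseteq> carrier M"
        using gA cg hd AM by auto
      have pc: "p \<otimes>\<^bsub>N\<^esub> \<phi> c \<in> carrier N" and dr: "\<phi> d \<otimes>\<^bsub>N\<^esub> r \<in> carrier N"
        using p r c d phi_carrier by auto
      have hP: "pairs (p \<otimes>\<^bsub>N\<^esub> \<phi> c) (\<phi> d \<otimes>\<^bsub>N\<^esub> r) h \<subseteq> P'"
        unfolding pairs_sub
      proof (intro allI impI)
        fix s assume s: "s \<le> length h"
        have "pat (p \<otimes>\<^bsub>N\<^esub> \<phi> c) (\<phi> d \<otimes>\<^bsub>N\<^esub> r) h s = pat (p \<otimes>\<^bsub>N\<^esub> \<phi> c) r (h @ [d]) s"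
          using pat_snoc[of h d "p \<otimes>\<^bsub>N\<^esub> \<phi> c" r s] hM d pc r s by auto
        also have "\<dots> = pat p r g (Suc s)"
          using pat_Cons[of c "h @ [d]" p r s] cg hd c d hM p r by auto
        also have "\<dots> \<in> P'" using gi[of "Suc s"] s cg hd by auto
        finally show "pat (p \<otimes>\<^bsub>N\<^esub> \<phi> c) (\<phi> d \<otimes>\<^bsub>N\<^esub> r) h s \<in> P'" .
      qed
      have hF: "Fe (p \<otimes>\<^bsub>N\<^esub> \<phi> c) (\<phi> d \<otimes>\<^bsub>N\<^esub> r) (val h) \<in> Fset (p \<otimes>\<^bsub>N\<^esub> \<phi> c) (\<phi> d \<otimes>\<^bsub>N\<^esub> r) P'"
        unfolding Fset_def using hA hP by auto
      have eq: "Fe p r (val g) = G c d (Fe (p \<otimes>\<^bsub>N\<^esub> \<phi> c) (\<phi> d \<otimes>\<^bsub>N\<^esub> r) (val h))"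
      proof (rule ext, rule ext)
        fix x y
        show "Fe p r (val g) x y = G c d (Fe (p \<otimes>\<^bsub>N\<^esub> \<phi> c) (\<phi> d \<otimes>\<^bsub>N\<^esub> r) (val h)) x y"
        proof (cases "x \<in> carrier M \<and> \<phi> x = p \<and> y \<in> carrier M \<and> \<phi> y = r")
          case True
          then have x: "x \<in> carrier M" "\<phi> x = p" and y: "y \<in> carrier M" "\<phi> y = r" by auto
          have vh: "val h \<in> carrier M" using hM val_carrier by auto
          have vg: "val g = c \<otimes>\<^bsub>M\<^esub> (val h \<otimes>\<^bsub>M\<^esub> d)"
            using cg hd c d hM by (simp add: val_append)
          show ?thesis unfolding G_def Fe_def using True x y c d vh vg
            by (simp add: phi_mult M.m_assoc)
        next
          case False
          then show ?thesis unfolding G_def Fe_def by (simp only: if_not_P[OF False] if_False)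
        qed
      qed
      show ?thesis using eq hF c d by blast
    qed
  qed
  have finF: "finite (Fset (p \<otimes>\<^bsub>N\<^esub> \<phi> c) (\<phi> d \<otimes>\<^bsub>N\<^esub> r) P')" if "c \<in> A" "d \<in> A" for c d
    using IH that AM p r phi_carrier unfolding P'_def by blast
  have finSegF: "finite ((\<lambda>g. Fe p r (val g)) ` Segs)"
  proof (rule finite_subset)
    show "(\<lambda>g. Fe p r (val g)) ` Segs \<subseteq> (\<lambda>c. Fe p r (c \<otimes>\<^bsub>M\<^esub> \<one>\<^bsub>M\<^esub>)) ` A \<union>
      (\<Union>c\<in>A. \<Union>d\<in>A. G c d ` Fset (p \<otimes>\<^bsub>N\<^esub> \<phi> c) (\<phi> d \<otimes>\<^bsub>N\<^esub> r) P')" using segF by blast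
    show "finite ((\<lambda>c. Fe p r (c \<otimes>\<^bsub>M\<^esub> \<one>\<^bsub>M\<^esub>)) ` A \<union>
      (\<Union>c\<in>A. \<Union>d\<in>A. G c d ` Fset (p \<otimes>\<^bsub>N\<^esub> \<phi> c) (\<phi> d \<otimes>\<^bsub>N\<^esub> r) P'))"
      using finA finF by auto
  qed
  have finB: "finite B"
  proof -
    have "B \<subseteq> (\<lambda>F. {m' \<in> TS. Fe p r m' = F}) ` ((\<lambda>g. Fe p r (val g)) ` Segs)"
      unfolding B_def using cls segTS unfolding TS_def R_def by auto
    then show ?thesis using finSegF finite_subset by blast
  qed
  have BC: "B \<subseteq> carrier TM"
    unfolding B_def TM_def trace_monoid_def R_def using segTS unfolding TS_def by (auto intro!: quotientI)
  have finK: "finite K" using tr p r finB BC AM unfolding locally_finite_monoid_def K_def TM_def by blast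
  have oneK: "R `` {\<one>\<^bsub>M\<^esub>} \<in> K"
    unfolding K_def gen_submonoid_def
    using submonoid.one_closed[of _ TM] unfolding TM_def trace_monoid_def R_def by fastforce
  have multK: "X \<otimes>\<^bsub>TM\<^esub> Y \<in> K" if "X \<in> K" "Y \<in> K" for X Y
    using that submonoid.m_closed[of _ TM] unfolding K_def gen_submonoid_def by blast
  have BK: "B \<subseteq> K" unfolding K_def gen_submonoid_def by blast
  define H where "H = (\<lambda>c F. (\<lambda>x y. if x \<in> carrier M \<and> \<phi> x = p \<and> y \<in> carrier M \<and> \<phi> y = q
      then F (x \<otimes>\<^bsub>M\<^esub> c) y else undefined) :: 'a \<Rightarrow> 'a \<Rightarrow> 'a)"
  have tailF: "Fe p q (val t) \<in> {Fe p q \<one>\<^bsub>M\<^esub>} \<union> (\<Union>c\<in>A. H c ` Fset (p \<otimes>\<^bsub>N\<^esub> \<phi> c) q P')"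
    if t: "t \<in> Tails" for t
  proof (cases t)
    case Nil then show ?thesis by simp
  next
    case (Cons c t')
    from t have tA: "set t \<subseteq> A" and ti: "\<And>s. 0 < s \<Longrightarrow> s \<le> length t \<Longrightarrow> pat p q t s \<in> P'"
      unfolding Tails_def by auto
    have c: "c \<in> A" "c \<in> carrier M" and tM: "set t' \<subseteq> carrier M" and t'A: "set t' \<subseteq> A"
      using tA Cons AM by auto
    have pc: "p \<otimes>\<^bsub>N\<^esub> \<phi> c \<in> carrier N" using p c phi_carrier by auto
    have tP: "pairs (p \<otimes>\<^bsub>N\<^esub> \<phi> c) q t' \<subseteq> P'"
      unfolding pairs_sub
    proof (intro allI impI)
      fix s assume s: "s \<le> length t'"
      have "pat (p \<otimes>\<^bsub>N\<^esub> \<phi> c) q t' s = pat p q t (Suc s)"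
        using pat_Cons[of c t' p q s] Cons c tM p q by auto
      also have "\<dots> \<in> P'" using ti[of "Suc s"] s Cons by auto
      finally show "pat (p \<otimes>\<^bsub>N\<^esub> \<phi> c) q t' s \<in> P'" .
    qed
    have hF: "Fe (p \<otimes>\<^bsub>N\<^esub> \<phi> c) q (val t') \<in> Fset (p \<otimes>\<^bsub>N\<^esub> \<phi> c) q P'"
      unfolding Fset_def using t'A tP by auto
    have eq: "Fe p q (val t) = H c (Fe (p \<otimes>\<^bsub>N\<^esub> \<phi> c) q (val t'))"
    proof (rule ext, rule ext)
      fix x y
      show "Fe p q (val t) x y = H c (Fe (p \<otimes>\<^bsub>N\<^esub> \<phi> c) q (val t')) x y"
      proof (cases "x \<in> carrier M \<and> \<phi> x = p \<and> y \<in> carrier M \<and> \<phi> y = q")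
        case True
        then have x: "x \<in> carrier M" "\<phi> x = p" and y: "y \<in> carrier M" "\<phi> y = q" by auto
        have vt: "val t' \<in> carrier M" using tM val_carrier by auto
        show ?thesis unfolding H_def Fe_def using True x y c vt Cons
          by (simp add: phi_mult M.m_assoc)
      next
        case False
        then show ?thesis unfolding H_def Fe_def by (simp only: if_not_P[OF False] if_False)
      qed
    qed
    show ?thesis using eq hF c by blast
  qed
  have finT: "finite ((\<lambda>w. Fe p q (val w)) ` Tails)"
  proof (rule finite_subset)
    show "(\<lambda>w. Fe p q (val w)) ` Tails \<subseteq> {Fe p q \<one>\<^bsub>M\<^esub>} \<union> (\<Union>c\<in>A. H c ` Fset (p \<otimes>\<^bsub>N\<^esub> \<phi> c) q P')"
      using tailF by blast
    have "finite (Fset (p \<otimes>\<^bsub>N\<^esub> \<phi> c) q P')" if "c \<in> A" for c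
      using IH that AM p q phi_carrier unfolding P'_def by blast
    then show "finite ({Fe p q \<one>\<^bsub>M\<^esub>} \<union> (\<Union>c\<in>A. H c ` Fset (p \<otimes>\<^bsub>N\<^esub> \<phi> c) q P'))"
      using finA by auto
  qed
  have decomp: "set w \<subseteq> A \<longrightarrow> pairs p q w \<subseteq> P \<longrightarrow> psi w \<otimes>\<^bsub>N\<^esub> q = r \<longrightarrow>
     (\<exists>m t. m \<in> TS \<and> R `` {m} \<in> K \<and> t \<in> Tails \<and> val w = m \<otimes>\<^bsub>M\<^esub> val t)" for w
  proof (induction w rule: length_induct)
    case (1 w)
    show ?case
    proof (intro impI)
      assume wA: "set w \<subseteq> A" and wP: "pairs p q w \<subseteq> P" and wr: "psi w \<otimes>\<^bsub>N\<^esub> q = r"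
      have wM: "set w \<subseteq> carrier M" using wA AM by auto
      show "\<exists>m t. m \<in> TS \<and> R `` {m} \<in> K \<and> t \<in> Tails \<and> val w = m \<otimes>\<^bsub>M\<^esub> val t"
      proof (cases "\<forall>t. 0 < t \<and> t \<le> length w \<longrightarrow> pat p q w t \<in> P'")
        case True
        then have "w \<in> Tails" unfolding Tails_def using wA wr by auto
        moreover have "\<one>\<^bsub>M\<^esub> \<in> TS" unfolding TS_def using TS_one p r by auto
        moreover have "val w = \<one>\<^bsub>M\<^esub> \<otimes>\<^bsub>M\<^esub> val w" using val_carrier wM by simp
        ultimately show ?thesis using oneK by blast
      next
        case False
        define t0 where "t0 = (LEAST t. 0 < t \<and> t \<le> length w \<and> pat p q w t \<notin> P')"
        have ex: "\<exists>t. 0 < t \<and> t \<le> length w \<and> pat p q w t \<notin> P'" using False by auto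
        have t0: "0 < t0" "t0 \<le> length w" "pat p q w t0 \<notin> P'"
          using LeastI_ex[OF ex] unfolding t0_def by auto
        have tmin: "pat p q w t \<in> P'" if "0 < t" "t < t0" for t
          using not_less_Least[of t "\<lambda>t. 0 < t \<and> t \<le> length w \<and> pat p q w t \<notin> P'"] that t0
          unfolding t0_def by auto
        have "pat p q w t0 \<in> P" using wP t0 pairs_sub by auto
        then have "pat p q w t0 = (p, r)" using t0(3) unfolding P'_def by auto
        then have e1: "p \<otimes>\<^bsub>N\<^esub> psi (take t0 w) = p" and e2: "psi (drop t0 w) \<otimes>\<^bsub>N\<^esub> q = r"
          unfolding pat_def by auto
        define g where "g = take t0 w"
        define w' where "w' = drop t0 w"
        have wgw: "w = g @ w'" unfolding g_def w'_def by simp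
        have gA: "set g \<subseteq> A" and w'A: "set w' \<subseteq> A"
          using wA unfolding g_def w'_def by (meson in_set_dropD in_set_takeD subset_code(1))+
        have gM: "set g \<subseteq> carrier M" and w'M: "set w' \<subseteq> carrier M" using gA w'A AM by auto
        have lg: "length g = t0" using t0 unfolding g_def by simp
        have gS: "g \<in> Segs"
        proof -
          have "g \<noteq> []" using lg t0 by auto
          moreover have "p \<otimes>\<^bsub>N\<^esub> psi g = p" using e1 g_def by simp
          moreover have "psi g \<otimes>\<^bsub>N\<^esub> r = r"
          proof -
            have "psi g \<otimes>\<^bsub>N\<^esub> r = psi g \<otimes>\<^bsub>N\<^esub> (psi w' \<otimes>\<^bsub>N\<^esub> q)" using e2 w'_def by simp
            also have "\<dots> = psi w \<otimes>\<^bsub>N\<^esub> q" using wgw gM w'M q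
              by (simp add: psi_append psi_carrier N.m_assoc)
            finally show ?thesis using wr by simp
          qed
          moreover have "pat p r g t \<in> P'" if "0 < t" "t < length g" for t
          proof -
            have "pat p r g t = pat p q w t"
              using pat_prefix[of w p q t t0] wM p q that lg e2 unfolding g_def by auto
            then show ?thesis using tmin that lg by auto
          qed
          ultimately show ?thesis unfolding Segs_def using gA by auto
        qed
        have w'P: "pairs p q w' \<subseteq> P" unfolding pairs_sub
        proof (intro allI impI)
          fix s assume s: "s \<le> length w'"
          have "pat p q w' s = pat p q w (t0 + s)"
            using pat_suffix[of w p q t0 s] wM p q e1 unfolding w'_def by auto
          moreover have "t0 + s \<le> length w" using s t0 unfolding w'_def by auto
          ultimately show "pat p q w' s \<in> P" using wP pairs_sub by auto
        qed
        have "length w' < length w" using t0 unfolding w'_def by auto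
        then obtain m' t' where m': "m' \<in> TS" "R `` {m'} \<in> K" "t' \<in> Tails" "val w' = m' \<otimes>\<^bsub>M\<^esub> val t'"
          using 1 w'A w'P e2 unfolding w'_def by blast
        have vgTS: "val g \<in> TS" using segTS gS by auto
        have mTS: "val g \<otimes>\<^bsub>M\<^esub> m' \<in> TS" using TS_mult vgTS m'(1) p r unfolding TS_def by blast
        have "R `` {val g \<otimes>\<^bsub>M\<^esub> m'} = R `` {val g} \<otimes>\<^bsub>TM\<^esub> R `` {m'}"
          using trmult vgTS m'(1) p r unfolding TS_def R_def TM_def by auto
        moreover have "R `` {val g} \<in> K" using BK gS unfolding B_def by auto
        ultimately have mK: "R `` {val g \<otimes>\<^bsub>M\<^esub> m'} \<in> K" using multK m'(2) by auto
        have m'C: "m' \<in> carrier M" using m'(1) unfolding TS_def trace_set_def by auto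
        have t'C: "val t' \<in> carrier M" using m'(3) AM val_carrier unfolding Tails_def by auto
        have "val w = val g \<otimes>\<^bsub>M\<^esub> m' \<otimes>\<^bsub>M\<^esub> val t'"
          using wgw gM w'M m'(4) m'C t'C val_carrier by (simp add: val_append M.m_assoc)
        then show ?thesis using mTS mK m'(3) by blast
      qed
    qed
  qed
  define Phi where "Phi = (\<lambda>(C::'a set, F::'a \<Rightarrow> 'a \<Rightarrow> 'a). (\<lambda>x y. if x \<in> carrier M \<and> \<phi> x = p \<and> y \<in> carrier M \<and> \<phi> y = q
      then F (x \<otimes>\<^bsub>M\<^esub> (SOME m. m \<in> C)) y else undefined) :: 'a \<Rightarrow> 'a \<Rightarrow> 'a)"
  have cover: "{Fe p q (val w) | w. set w \<subseteq> A \<and> pairs p q w \<subseteq> P \<and> psi w \<otimes>\<^bsub>N\<^esub> q = r}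
      \<subseteq> Phi ` (K \<times> (\<lambda>w. Fe p q (val w)) ` Tails)"
  proof
    fix F assume "F \<in> {Fe p q (val w) | w. set w \<subseteq> A \<and> pairs p q w \<subseteq> P \<and> psi w \<otimes>\<^bsub>N\<^esub> q = r}"
    then obtain w where F: "F = Fe p q (val w)" and w: "set w \<subseteq> A" "pairs p q w \<subseteq> P" "psi w \<otimes>\<^bsub>N\<^esub> q = r"
      by auto
    obtain m t where mt: "m \<in> TS" "R `` {m} \<in> K" "t \<in> Tails" "val w = m \<otimes>\<^bsub>M\<^esub> val t"
      using decomp w by blast
    define m0 where "m0 = (SOME x. x \<in> R `` {m})"
    have "m \<in> R `` {m}" using cls mt(1) unfolding TS_def R_def by auto
    then have "m0 \<in> R `` {m}" unfolding m0_def by (rule someI)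
    then have m0: "m0 \<in> TS" "Fe p r m0 = Fe p r m" using cls mt(1) unfolding TS_def R_def by auto
    have tM: "set t \<subseteq> A" "psi t \<otimes>\<^bsub>N\<^esub> q = r" using mt(3) unfolding Tails_def by auto
    have vt: "val t \<in> carrier M" using tM AM val_carrier by auto
    have mC: "m \<in> carrier M" "m0 \<in> carrier M" "p \<otimes>\<^bsub>N\<^esub> \<phi> m0 = p"
      using mt(1) m0(1) unfolding TS_def trace_set_def by auto
    have "F = Phi (R `` {m}, Fe p q (val t))"
    proof (rule ext, rule ext)
      fix x y
      show "F x y = Phi (R `` {m}, Fe p q (val t)) x y"
      proof (cases "x \<in> carrier M \<and> \<phi> x = p \<and> y \<in> carrier M \<and> \<phi> y = q")
        case True
        then have x: "x \<in> carrier M" "\<phi> x = p" and y: "y \<in> carrier M" "\<phi> y = q" by auto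
        have ty: "val t \<otimes>\<^bsub>M\<^esub> y \<in> carrier M" "\<phi> (val t \<otimes>\<^bsub>M\<^esub> y) = r"
          using vt y tM by (auto simp: phi_mult psi_def)
        have x0: "x \<otimes>\<^bsub>M\<^esub> m0 \<in> carrier M" "\<phi> (x \<otimes>\<^bsub>M\<^esub> m0) = p" using x mC by (auto simp: phi_mult)
        have k: "x \<otimes>\<^bsub>M\<^esub> m0 \<otimes>\<^bsub>M\<^esub> (val t \<otimes>\<^bsub>M\<^esub> y) = x \<otimes>\<^bsub>M\<^esub> m \<otimes>\<^bsub>M\<^esub> (val t \<otimes>\<^bsub>M\<^esub> y)"
          using fun_cong[OF fun_cong[OF m0(2), of x], of "val t \<otimes>\<^bsub>M\<^esub> y"] x ty unfolding Fe_def by simp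
        have "F x y = x \<otimes>\<^bsub>M\<^esub> m \<otimes>\<^bsub>M\<^esub> (val t \<otimes>\<^bsub>M\<^esub> y)"
          unfolding F Fe_def using True mt(4) x y mC vt by (simp add: M.m_assoc)
        also have "\<dots> = x \<otimes>\<^bsub>M\<^esub> m0 \<otimes>\<^bsub>M\<^esub> (val t \<otimes>\<^bsub>M\<^esub> y)" using k by simp
        also have "\<dots> = x \<otimes>\<^bsub>M\<^esub> m0 \<otimes>\<^bsub>M\<^esub> val t \<otimes>\<^bsub>M\<^esub> y"
          using x0 y x mC vt by (simp add: M.m_assoc)
        also have "\<dots> = Fe p q (val t) (x \<otimes>\<^bsub>M\<^esub> m0) y" unfolding Fe_def using x0 y by simp
        also have "\<dots> = Phi (R `` {m}, Fe p q (val t)) x y"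
          unfolding Phi_def m0_def using True by simp
        finally show ?thesis .
      next
        case False
        then show ?thesis unfolding F Phi_def Fe_def by (simp only: if_not_P[OF False] if_False case_prod_conv)
      qed
    qed
    then show "F \<in> Phi ` (K \<times> (\<lambda>w. Fe p q (val w)) ` Tails)" using mt(2,3) by blast
  qed
  show ?thesis by (rule finite_subset[OF cover finite_imageI[OF finite_cartesian_product[OF finK finT]]])
qed

lemma main: "finite P \<Longrightarrow> \<forall>p\<in>carrier N. \<forall>q\<in>carrier N. finite (Fset p q P)"
proof (induction P rule: finite_psubset_induct)
  case (psubset P)
  show ?case
  proof (intro ballI)
    fix p q assume p: "p \<in> carrier N" and q: "q \<in> carrier N"
    define S where "S = (\<lambda>r. {Fe p q (val w) | w. set w \<subseteq> A \<and> pairs p q w \<subseteq> P \<and> psi w \<otimes>\<^bsub>N\<^esub> q = r})"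
    have sub: "Fset p q P \<subseteq> (\<Union>r \<in> {r \<in> carrier N. (p,r) \<in> P}. S r)"
    proof
      fix F assume "F \<in> Fset p q P"
      then obtain w where F: "F = Fe p q (val w)" and w: "set w \<subseteq> A" "pairs p q w \<subseteq> P"
        unfolding Fset_def by auto
      have "pat p q w 0 \<in> P" using w(2) pairs_sub by auto
      then have "(p, psi w \<otimes>\<^bsub>N\<^esub> q) \<in> P" using p unfolding pat_def by simp
      moreover have "psi w \<otimes>\<^bsub>N\<^esub> q \<in> carrier N" using w AM q psi_carrier by auto
      ultimately show "F \<in> (\<Union>r \<in> {r \<in> carrier N. (p,r) \<in> P}. S r)"
        unfolding S_def using F w by blast
    qed
    have "finite {r \<in> carrier N. (p,r) \<in> P}"
    proof (rule finite_subset[of _ "snd ` P"])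
      show "{r \<in> carrier N. (p, r) \<in> P} \<subseteq> snd ` P" by (auto intro: image_eqI[of _ snd "(p, _)"])
      show "finite (snd ` P)" using psubset.hyps by simp
    qed
    moreover have "finite (S r)" if "r \<in> {r \<in> carrier N. (p,r) \<in> P}" for r
    proof -
      have "P - {(p,r)} \<subset> P" using that by auto
      then have "\<forall>p'\<in>carrier N. \<forall>q'\<in>carrier N. finite (Fset p' q' (P - {(p,r)}))"
        using psubset.IH by blast
      then show ?thesis unfolding S_def using step p q that by blast
    qed
    ultimately have "finite (\<Union>r \<in> {r \<in> carrier N. (p,r) \<in> P}. S r)" by (rule finite_UN_I)
    then show "finite (Fset p q P)" using sub by (rule finite_subset[rotated])
  qed
qed

end

theorem theorem2p1:
  fixes M :: "('a, 'c) monoid_scheme" and N :: "('b, 'd) monoid_scheme" and \<phi> :: "'a \<Rightarrow> 'b"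
  assumes "monoid M" and "monoid N"
    and "\<phi> \<in> monoid_hom M N"
    and "locally_finite_monoid N"
    and "\<forall>n1 \<in> carrier N. \<forall>n2 \<in> carrier N. locally_finite_monoid (trace_monoid \<phi> M N n1 n2)"
  shows "locally_finite_monoid M"
  unfolding locally_finite_monoid_def
proof (intro allI impI)
  fix A assume A: "A \<subseteq> carrier M \<and> finite A"
  interpret L: LF M N \<phi> A
    using assms A unfolding LF_def LF_axioms_def by auto
  define T where "T = gen_submonoid N (\<phi> ` A)"
  have finT: "finite T" using assms(4) A L.phi_carrier unfolding T_def locally_finite_monoid_def by blast
  have psiT: "L.psi w \<in> T" if "set w \<subseteq> A" for w
    unfolding T_def gen_submonoid_def
  proof (intro InterI, clarify)
    fix H assume H: "submonoid H N" "\<phi> ` A \<subseteq> H"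
    show "L.psi w \<in> H" using that
    proof (induction w)
      case Nil then show ?case using H submonoid.one_closed by auto
    next
      case (Cons c w)
      have "L.psi (c # w) = \<phi> c \<otimes>\<^bsub>N\<^esub> L.psi w" using Cons.prems A by (intro L.psi_Cons) auto
      then show ?case using Cons H submonoid.m_closed by fastforce
    qed
  qed
  have gen: "gen_submonoid M A \<subseteq> L.val ` {w. set w \<subseteq> A}"
    unfolding gen_submonoid_def
  proof (rule Inter_lower, clarify, intro conjI)
    show "submonoid (L.val ` {w. set w \<subseteq> A}) M"
    proof
      show "L.val ` {w. set w \<subseteq> A} \<subseteq> carrier M" using A L.val_carrier by blast
      fix x y assume "x \<in> L.val ` {w. set w \<subseteq> A}" "y \<in> L.val ` {w. set w \<subseteq> A}"
      then obtain u v where "x = L.val u" "y = L.val v" "set u \<subseteq> A" "set v \<subseteq> A" by auto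
      then show "x \<otimes>\<^bsub>M\<^esub> y \<in> L.val ` {w. set w \<subseteq> A}"
        using A by (auto intro!: image_eqI[of _ _ "u @ v"] simp: L.val_append)
    next
      show "\<one>\<^bsub>M\<^esub> \<in> L.val ` {w. set w \<subseteq> A}" by (auto intro!: image_eqI[of _ _ "[]"])
    qed
    show "A \<subseteq> L.val ` {w. set w \<subseteq> A}"
    proof
      fix a assume "a \<in> A"
      then show "a \<in> L.val ` {w. set w \<subseteq> A}" using A by (auto intro!: image_eqI[of _ _ "[a]"])
    qed
  qed
  have "L.val ` {w. set w \<subseteq> A} \<subseteq> (\<lambda>F. F \<one>\<^bsub>M\<^esub> \<one>\<^bsub>M\<^esub>) ` L.Fset \<one>\<^bsub>N\<^esub> \<one>\<^bsub>N\<^esub> (T \<times> T)"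
  proof
    fix x assume "x \<in> L.val ` {w. set w \<subseteq> A}"
    then obtain w where x: "x = L.val w" and w: "set w \<subseteq> A" by auto
    have wM: "set w \<subseteq> carrier M" using w A by auto
    have "L.pairs \<one>\<^bsub>N\<^esub> \<one>\<^bsub>N\<^esub> w \<subseteq> T \<times> T"
      unfolding L.pairs_sub
    proof (intro allI impI)
      fix t assume "t \<le> length w"
      have s: "set (take t w) \<subseteq> A" "set (drop t w) \<subseteq> A" using w
        by (meson in_set_dropD in_set_takeD subset_code(1))+
      then have "set (take t w) \<subseteq> carrier M" "set (drop t w) \<subseteq> carrier M" using A by auto
      then show "L.pat \<one>\<^bsub>N\<^esub> \<one>\<^bsub>N\<^esub> w t \<in> T \<times> T"
        unfolding L.pat_def using psiT[OF s(1)] psiT[OF s(2)] by (simp add: L.psi_carrier)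
    qed
    then have "L.Fe \<one>\<^bsub>N\<^esub> \<one>\<^bsub>N\<^esub> (L.val w) \<in> L.Fset \<one>\<^bsub>N\<^esub> \<one>\<^bsub>N\<^esub> (T \<times> T)"
      unfolding L.Fset_def using w by auto
    moreover have "L.Fe \<one>\<^bsub>N\<^esub> \<one>\<^bsub>N\<^esub> (L.val w) \<one>\<^bsub>M\<^esub> \<one>\<^bsub>M\<^esub> = x"
      unfolding L.Fe_def x using wM L.val_carrier L.phi_one by simp
    ultimately show "x \<in> (\<lambda>F. F \<one>\<^bsub>M\<^esub> \<one>\<^bsub>M\<^esub>) ` L.Fset \<one>\<^bsub>N\<^esub> \<one>\<^bsub>N\<^esub> (T \<times> T)"
      by force
  qed
  moreover have "finite (L.Fset \<one>\<^bsub>N\<^esub> \<one>\<^bsub>N\<^esub> (T \<times> T))"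
    using L.main[of "T \<times> T"] finT by auto
  ultimately have "finite (L.val ` {w. set w \<subseteq> A})" by (meson finite_imageI finite_subset)
  then show "finite (gen_submonoid M A)" using gen by (rule finite_subset[rotated])
qed

end
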